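(* There exist finite constants $M_{t,j}\ge 0$ ($t\in\mathcal T$, $j=1,2$), depending only on the multilinear program and not on $\hat v$, such that for every indicator vector $\hat v\in\{0,1\}^{\mathcal T}$ of a proper triple set and every optimal solution $(\lambda,\mu)$ of the linear program $\mathrm{D}(\hat v)$ with $\lambda_{t,1}=\lambda_{t,2}=\lambda_{t,3}=0$ for every $t$ with $\hat v_t=0$, we have $\lambda_{t,j}\le M_{t,j}$ for all $t\in\mathcal T$ and $j=1,2$.
   Context: A multilinear program has data $n,m$, coefficients $\alpha_i\in\mathbb{R}$ and nonempty index sets $J_i\subseteq[n]$. Let $\mathcal N=\bigcup_i\{J:\emptyset\ne J\subseteq J_i\}$ and $\beta_J=\sum_{i:J_i=J}\alpha_i$. A triple is $t=(J,J',J'')$ with $J''\in\mathcal N$, $|J''|\ge2$, $J,J'$ nonempty, disjoint, $J\cup J'=J''$, listed with $J,J'$ in lexicographic order; $\mathsf{tail1}(t)=J$, $\mathsf{tail2}(t)=J'$, $\mathsf{head}(t)=J''$; $\mathcal T$ is the set of all triples. A proper triple set is a set $T\subseteq\mathcal T$ containing a subset $T'$ such that (1) every $J_i$ with $|J_i|>1$ is the head of some triple in $T'$, and (2) whenever a set $J$ with $|J|>1$ is the first or second element of a triple in $T'$, $J$ is the head of a different triple in $T'$; its indicator vector has $\hat v_t=1$ iff $t\in T$. $\mathrm{D}(\hat v)$: maximize $-\sum_{t\in\mathcal T}[(1-\hat v_t)(\lambda_{t,1}+\lambda_{t,2})+(2-\hat v_t)\lambda_{t,3}]-\sum_{J\in\mathcal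 N}\mu_J$ over $\lambda\ge0,\mu\ge0$ subject to, for every $J\in\mathcal N$, $\beta_J+\sum_{t:\mathsf{tail1}(t)=J}(-\lambda_{t,1}+\lambda_{t,3})+\sum_{t:\mathsf{tail2}(t)=J}(-\lambda_{t,2}+\lambda_{t,3})+\sum_{t:\mathsf{head}(t)=J}(\lambda_{t,1}+\lambda_{t,2}-\lambda_{t,3})+\mu_J\ge0$. *)

theory Defs
  imports Complex_Main
begin

text \<open>Multilinear program data: n, m, coefficients alpha i and index sets Js i (i in {1..m}).
Subsets of [n] are represented as nat sets; a triple is (J, J', J'').\<close>

type_synonym triple = "nat set \<times> nat set \<times> nat set"

definition calN :: "nat \<Rightarrow> (nat \<Rightarrow> nat set) \<Rightarrow> nat set set" where
  "calN m Js = (\<Union>i\<in>{1..m}. {J. J \<noteq> {} \<and> J \<subseteq> Js i})"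

definition beta :: "nat \<Rightarrow> (nat \<Rightarrow> real) \<Rightarrow> (nat \<Rightarrow> nat set) \<Rightarrow> nat set \<Rightarrow> real" where
  "beta m \<alpha> Js J = (\<Sum>i\<in>{i\<in>{1..m}. Js i = J}. \<alpha> i)"

definition tail1 :: "triple \<Rightarrow> nat set" where "tail1 t = fst t"
definition tail2 :: "triple \<Rightarrow> nat set" where "tail2 t = fst (snd t)"
definition head :: "triple \<Rightarrow> nat set" where "head t = snd (snd t)"

definition lex_less :: "nat set \<Rightarrow> nat set \<Rightarrow> bool" where
  "lex_less J J' = lexordp (<) (sorted_list_of_set J) (sorted_list_of_set J')"

definition calT :: "nat \<Rightarrow> (nat \<Rightarrow> nat set) \<Rightarrow> triple set" where
  "calT m Js = {(J, J', J''). J'' \<in> calN m Js \<and> card J'' \<ge> 2 \<and> J \<noteq> {} \<and> J' \<noteq> {}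
      \<and> J \<inter> J' = {} \<and> J \<union> J' = J'' \<and> lex_less J J'}"

definition proper_triple_set :: "nat \<Rightarrow> (nat \<Rightarrow> nat set) \<Rightarrow> triple set \<Rightarrow> bool" where
  "proper_triple_set m Js T \<longleftrightarrow> T \<subseteq> calT m Js \<and>
     (\<exists>T' \<subseteq> T.
        (\<forall>i\<in>{1..m}. card (Js i) > 1 \<longrightarrow> (\<exists>t\<in>T'. head t = Js i)) \<and>
        (\<forall>t\<in>T'. \<forall>J\<in>{tail1 t, tail2 t}. card J > 1 \<longrightarrow>
             (\<exists>t'\<in>T'. t' \<noteq> t \<and> head t' = J)))"

definition indicator_vec :: "triple set \<Rightarrow> triple \<Rightarrow> real" where
  "indicator_vec T t = (if t \<in> T then 1 else 0)"

text \<open>The dual LP D(vhat): variables lam t k (k = 1,2,3) and mu J.\<close>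
definition D_feasible :: "nat \<Rightarrow> (nat \<Rightarrow> real) \<Rightarrow> (nat \<Rightarrow> nat set)
    \<Rightarrow> (triple \<Rightarrow> nat \<Rightarrow> real) \<Rightarrow> (nat set \<Rightarrow> real) \<Rightarrow> bool" where
  "D_feasible m \<alpha> Js lam mu \<longleftrightarrow>
     (\<forall>t\<in>calT m Js. \<forall>k\<in>{1,2,3}. lam t k \<ge> 0) \<and>
     (\<forall>J\<in>calN m Js. mu J \<ge> 0) \<and>
     (\<forall>J\<in>calN m Js.
        beta m \<alpha> Js J
        + (\<Sum>t\<in>{t\<in>calT m Js. tail1 t = J}. - lam t 1 + lam t 3)
        + (\<Sum>t\<in>{t\<in>calT m Js. tail2 t = J}. - lam t 2 + lam t 3)
        + (\<Sum>t\<in>{t\<in>calT m Js. head t = J}. lam t 1 + lam t 2 - lam t 3)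
        + mu J \<ge> 0)"

definition D_obj :: "nat \<Rightarrow> (nat \<Rightarrow> nat set) \<Rightarrow> (triple \<Rightarrow> real)
    \<Rightarrow> (triple \<Rightarrow> nat \<Rightarrow> real) \<Rightarrow> (nat set \<Rightarrow> real) \<Rightarrow> real" where
  "D_obj m Js v lam mu =
     - (\<Sum>t\<in>calT m Js. (1 - v t) * (lam t 1 + lam t 2) + (2 - v t) * lam t 3)
     - (\<Sum>J\<in>calN m Js. mu J)"

definition D_optimal :: "nat \<Rightarrow> (nat \<Rightarrow> real) \<Rightarrow> (nat \<Rightarrow> nat set) \<Rightarrow> (triple \<Rightarrow> real)
    \<Rightarrow> (triple \<Rightarrow> nat \<Rightarrow> real) \<Rightarrow> (nat set \<Rightarrow> real) \<Rightarrow> bool" where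
  "D_optimal m \<alpha> Js v lam mu \<longleftrightarrow>
     D_feasible m \<alpha> Js lam mu \<and>
     (\<forall>lam' mu'. D_feasible m \<alpha> Js lam' mu' \<longrightarrow> D_obj m Js v lam' mu' \<le> D_obj m Js v lam mu)"

end

theory Submission
  imports Defs
begin

lemma calN_sub:
  assumes "\<forall>i\<in>{1..m}. Js i \<noteq> {} \<and> Js i \<subseteq> {1..n}"
  shows "calN m Js \<subseteq> Pow {1..n}"
  using assms unfolding calN_def by fastforce

lemma calN_fin:
  assumes "\<forall>i\<in>{1..m}. Js i \<noteq> {} \<and> Js i \<subseteq> {1..n}"
  shows "finite (calN m Js)"
  using calN_sub[OF assms] finite_subset by blast

lemma calT_sub:
  assumes "\<forall>i\<in>{1..m}. Js i \<noteq> {} \<and> Js i \<subseteq> {1..n}"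
  shows "calT m Js \<subseteq> Pow {1..n} \<times> Pow {1..n} \<times> Pow {1..n}"
  using calN_sub[OF assms] unfolding calT_def by blast

lemma calT_fin:
  assumes "\<forall>i\<in>{1..m}. Js i \<noteq> {} \<and> Js i \<subseteq> {1..n}"
  shows "finite (calT m Js)"
  by (rule finite_subset[OF calT_sub[OF assms]]) auto

lemma calT_props:
  assumes "t \<in> calT m Js"
  shows "head t \<in> calN m Js" "tail1 t \<in> calN m Js" "tail2 t \<in> calN m Js"
    "tail1 t \<subset> head t" "tail2 t \<subset> head t"
proof -
  obtain a b c where t: "t = (a,b,c)" by (cases t) auto
  have c: "c \<in> calN m Js" "a \<noteq> {}" "b \<noteq> {}" "a \<inter> b = {}" "a \<union> b = c"
    using assms unfolding t calT_def by auto
  then obtain i where i: "i \<in> {1..m}" "c \<subseteq> Js i" unfolding calN_def by blast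
  show "head t \<in> calN m Js" using c t head_def by simp
  show "tail1 t \<in> calN m Js" using c i unfolding t tail1_def calN_def by auto
  show "tail2 t \<in> calN m Js" using c i unfolding t tail2_def calN_def by auto
  show "tail1 t \<subset> head t" using c unfolding t tail1_def head_def by auto
  show "tail2 t \<subset> head t" using c unfolding t tail2_def head_def by auto
qed

lemma calN_card:
  assumes "\<forall>i\<in>{1..m}. Js i \<noteq> {} \<and> Js i \<subseteq> {1..n}" "J \<in> calN m Js"
  shows "finite J" "card J \<ge> 1" "card J \<le> n"
proof -
  have s: "J \<subseteq> {1..n}" using calN_sub[OF assms(1)] assms(2) by auto
  show f: "finite J" using s finite_subset by blast
  have "J \<noteq> {}" using assms(2) unfolding calN_def by auto
  then show "card J \<ge> 1" using f by (simp add: Suc_leI card_gt_0_iff)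
  show "card J \<le> n" using card_mono[OF _ s] by simp
qed

lemma beta_abs: "\<bar>beta m \<alpha> Js J\<bar> \<le> (\<Sum>i\<in>{1..m}. \<bar>\<alpha> i\<bar>)"
proof -
  have "\<bar>beta m \<alpha> Js J\<bar> \<le> (\<Sum>i\<in>{i\<in>{1..m}. Js i = J}. \<bar>\<alpha> i\<bar>)"
    unfolding beta_def by (rule sum_abs)
  also have "\<dots> \<le> (\<Sum>i\<in>{1..m}. \<bar>\<alpha> i\<bar>)"
    by (rule sum_mono2) auto
  finally show ?thesis .
qed

theorem lemma5:
  fixes n m :: nat and \<alpha> :: "nat \<Rightarrow> real" and Js :: "nat \<Rightarrow> nat set"
  assumes "\<forall>i\<in>{1..m}. Js i \<noteq> {} \<and> Js i \<subseteq> {1..n}"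
  shows "\<exists>M :: triple \<Rightarrow> nat \<Rightarrow> real.
           (\<forall>t\<in>calT m Js. \<forall>j\<in>{1,2}. M t j \<ge> 0) \<and>
           (\<forall>T lam mu. proper_triple_set m Js T \<longrightarrow>
              D_optimal m \<alpha> Js (indicator_vec T) lam mu \<longrightarrow>
              (\<forall>t\<in>calT m Js. indicator_vec T t = 0 \<longrightarrow> lam t 1 = 0 \<and> lam t 2 = 0 \<and> lam t 3 = 0) \<longrightarrow>
              (\<forall>t\<in>calT m Js. \<forall>j\<in>{1,2}. lam t j \<le> M t j))"
proof -
  define CN where "CN = calN m Js"
  define CT where "CT = calT m Js"
  have finN: "finite CN" unfolding CN_def using calN_fin[OF assms] .
  have finT: "finite CT" unfolding CT_def using calT_fin[OF assms] .
  define C where "C = (\<Sum>J\<in>CN. max 0 (- beta m \<alpha> Js J))"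
  define A where "A = (\<Sum>i\<in>{1..m}. \<bar>\<alpha> i\<bar>) + 3 * C"
  define N where "N = card CT"
  define b where "b = (\<lambda>k::nat. A * (2 * real N + 1) ^ k)"
  have C0: "C \<ge> 0" unfolding C_def by (rule sum_nonneg) auto
  have A0: "A \<ge> 0" unfolding A_def using C0 by (simp add: sum_nonneg)
  have bmono: "b k \<le> b k'" if "k \<le> k'" for k k'
    unfolding b_def using A0 that by (intro mult_left_mono power_increasing) auto
  have bA: "A \<le> b k" for k
  proof -
    have "1 \<le> (2 * real N + 1) ^ k" by (rule one_le_power) auto
    then show ?thesis unfolding b_def using A0 by (metis mult.right_neutral mult_left_mono)
  qed
  have bSuc: "b (Suc k) = b k + 2 * real N * b k" for k
    unfolding b_def by (simp add: algebra_simps)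
  show ?thesis
  proof (intro exI[of _ "\<lambda>t j. b n"] conjI ballI allI impI)
    fix t :: triple and j :: nat
    show "0 \<le> b n" using bA[of n] A0 by linarith
  next
    fix T lam mu t j
    assume opt: "D_optimal m \<alpha> Js (indicator_vec T) lam mu"
      and tT: "t \<in> calT m Js" and j: "j \<in> {1::nat, 2}"
    define v where "v = indicator_vec T"
    have v01: "v t = 0 \<or> v t = 1" for t unfolding v_def indicator_vec_def by auto
    have feas: "D_feasible m \<alpha> Js lam mu" using opt unfolding D_optimal_def by blast
    have lam0: "\<And>t k. t \<in> CT \<Longrightarrow> k \<in> {1,2,3} \<Longrightarrow> lam t k \<ge> 0"
      and mu0: "\<And>J. J \<in> CN \<Longrightarrow> mu J \<ge> 0"
      and cons: "\<And>J. J \<in> CN \<Longrightarrow> beta m \<alpha> Js J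
        + (\<Sum>t\<in>{t\<in>CT. tail1 t = J}. - lam t 1 + lam t 3)
        + (\<Sum>t\<in>{t\<in>CT. tail2 t = J}. - lam t 2 + lam t 3)
        + (\<Sum>t\<in>{t\<in>CT. head t = J}. lam t 1 + lam t 2 - lam t 3)
        + mu J \<ge> 0"
      using feas unfolding D_feasible_def CN_def CT_def by auto
    have feas0: "D_feasible m \<alpha> Js (\<lambda>t k. 0) (\<lambda>J. max 0 (- beta m \<alpha> Js J))"
      unfolding D_feasible_def by auto
    have "D_obj m Js v (\<lambda>t k. 0) (\<lambda>J. max 0 (- beta m \<alpha> Js J)) \<le> D_obj m Js v lam mu"
      using opt feas0 unfolding D_optimal_def v_def by blast
    then have objb: "(\<Sum>t\<in>CT. (1 - v t) * (lam t 1 + lam t 2) + (2 - v t) * lam t 3)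
        + (\<Sum>J\<in>CN. mu J) \<le> C"
      unfolding D_obj_def C_def CN_def CT_def by simp
    have termge: "lam t 3 \<le> (1 - v t) * (lam t 1 + lam t 2) + (2 - v t) * lam t 3" if "t \<in> CT" for t
      using v01[of t] lam0[OF that, of 1] lam0[OF that, of 2] lam0[OF that, of 3] by auto
    have S3: "(\<Sum>t\<in>CT. lam t 3) \<le> (\<Sum>t\<in>CT. (1 - v t) * (lam t 1 + lam t 2) + (2 - v t) * lam t 3)"
      by (rule sum_mono) (rule termge)
    have Smu0: "(\<Sum>J\<in>CN. mu J) \<ge> 0" by (rule sum_nonneg) (rule mu0)
    have S30: "(\<Sum>t\<in>CT. lam t 3) \<ge> 0" by (rule sum_nonneg) (simp add: lam0)
    have L3: "(\<Sum>t\<in>CT. lam t 3) \<le> C" using objb S3 Smu0 by linarith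
    have muC: "mu J \<le> C" if "J \<in> CN" for J
    proof -
      have "mu J \<le> (\<Sum>J\<in>CN. mu J)" by (rule member_le_sum[OF that]) (use finN mu0 in auto)
      then show ?thesis using objb S3 S30 by linarith
    qed
    have subL3: "(\<Sum>t\<in>{t\<in>CT. P t}. lam t 3) \<le> C" for P
    proof -
      have "(\<Sum>t\<in>{t\<in>CT. P t}. lam t 3) \<le> (\<Sum>t\<in>CT. lam t 3)"
        by (rule sum_mono2[OF finT]) (auto simp: lam0)
      then show ?thesis using L3 by linarith
    qed
    define out where "out J = (\<Sum>t\<in>{t\<in>CT. tail1 t = J}. lam t 1) + (\<Sum>t\<in>{t\<in>CT. tail2 t = J}. lam t 2)" for J
    define inn where "inn J = (\<Sum>t\<in>{t\<in>CT. head t = J}. lam t 1 + lam t 2)" for J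
    have outA: "out J \<le> A + inn J" if "J \<in> CN" for J
    proof -
      have e: "(\<Sum>t\<in>{t\<in>CT. tail1 t = J}. - lam t 1 + lam t 3)
        + (\<Sum>t\<in>{t\<in>CT. tail2 t = J}. - lam t 2 + lam t 3)
        + (\<Sum>t\<in>{t\<in>CT. head t = J}. lam t 1 + lam t 2 - lam t 3)
        = - out J + (\<Sum>t\<in>{t\<in>CT. tail1 t = J}. lam t 3) + (\<Sum>t\<in>{t\<in>CT. tail2 t = J}. lam t 3)
          + inn J - (\<Sum>t\<in>{t\<in>CT. head t = J}. lam t 3)"
        unfolding out_def inn_def by (simp add: sum.distrib sum_subtractf sum_negf)
      have h0: "(\<Sum>t\<in>{t\<in>CT. head t = J}. lam t 3) \<ge> 0" by (rule sum_nonneg) (simp add: lam0)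
      show ?thesis using cons[OF that] e h0 subL3[of "\<lambda>t. tail1 t = J"] subL3[of "\<lambda>t. tail2 t = J"]
        muC[OF that] beta_abs[of m \<alpha> Js J] unfolding A_def by linarith
    qed
    have l1out: "lam t 1 \<le> out (tail1 t)" and l2out: "lam t 2 \<le> out (tail2 t)" if "t \<in> CT" for t
    proof -
      have a1: "lam t 1 \<le> (\<Sum>t\<in>{t'\<in>CT. tail1 t' = tail1 t}. lam t 1)"
        by (rule member_le_sum) (use that finT lam0 in auto)
      have a2: "lam t 2 \<le> (\<Sum>t\<in>{t'\<in>CT. tail2 t' = tail2 t}. lam t 2)"
        by (rule member_le_sum) (use that finT lam0 in auto)
      have p1: "(\<Sum>t\<in>{t'\<in>CT. P t'}. lam t 1) \<ge> 0" for P by (rule sum_nonneg) (simp add: lam0)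
      have p2: "(\<Sum>t\<in>{t'\<in>CT. P t'}. lam t 2) \<ge> 0" for P by (rule sum_nonneg) (simp add: lam0)
      show "lam t 1 \<le> out (tail1 t)" unfolding out_def using a1 p2[of "\<lambda>t'. tail2 t' = tail1 t"] by linarith
      show "lam t 2 \<le> out (tail2 t)" unfolding out_def using a2 p1[of "\<lambda>t'. tail1 t' = tail2 t"] by linarith
    qed
    have key: "\<forall>J. J \<in> CN \<longrightarrow> card J = k \<longrightarrow> out J \<le> b k" for k
    proof (induction k rule: less_induct)
      case (less k)
      show ?case
      proof (intro allI impI)
        fix J assume J: "J \<in> CN" and cJ: "card J = k"
        have k1: "k \<ge> 1" using calN_card(2)[OF assms, of J] J cJ unfolding CN_def by simp
        have tb: "lam t 1 + lam t 2 \<le> 2 * b (k - 1)" if "t \<in> {t\<in>CT. head t = J}" for t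
        proof -
          have tC: "t \<in> CT" and h: "head t = J" using that by auto
          have P: "head t \<in> CN" "tail1 t \<in> CN" "tail2 t \<in> CN" "tail1 t \<subset> head t" "tail2 t \<subset> head t"
            using calT_props[of t m Js] tC unfolding CN_def CT_def by auto
          have fh: "finite (head t)" using calN_card(1)[OF assms] P(1) unfolding CN_def by auto
          have c1: "card (tail1 t) < k" using psubset_card_mono[OF fh P(4)] h cJ by simp
          have c2: "card (tail2 t) < k" using psubset_card_mono[OF fh P(5)] h cJ by simp
          have "out (tail1 t) \<le> b (card (tail1 t))" using less c1 P(2) by blast
          also have "\<dots> \<le> b (k - 1)" using c1 by (intro bmono) simp
          finally have o1: "out (tail1 t) \<le> b (k - 1)" .
          have "out (tail2 t) \<le> b (card (tail2 t))" using less c2 P(3) by blast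
          also have "\<dots> \<le> b (k - 1)" using c2 by (intro bmono) simp
          finally have o2: "out (tail2 t) \<le> b (k - 1)" .
          show ?thesis using l1out[OF tC] l2out[OF tC] o1 o2 by linarith
        qed
        have "inn J \<le> (\<Sum>t\<in>{t\<in>CT. head t = J}. 2 * b (k - 1))"
          unfolding inn_def by (rule sum_mono) (rule tb)
        also have "\<dots> = real (card {t\<in>CT. head t = J}) * (2 * b (k - 1))" by simp
        also have "\<dots> \<le> real N * (2 * b (k - 1))"
        proof (rule mult_right_mono)
          show "real (card {t\<in>CT. head t = J}) \<le> real N" unfolding N_def
            using card_mono[OF finT] by auto
          show "0 \<le> 2 * b (k - 1)" using bA[of "k-1"] A0 by linarith
        qed
        finally have "inn J \<le> 2 * real N * b (k - 1)" by simp
        moreover have "b k = b (k - 1) + 2 * real N * b (k - 1)" using bSuc[of "k-1"] k1 by simp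
        ultimately show "out J \<le> b k" using outA[OF J] bA[of "k-1"] by linarith
      qed
    qed
    have tC: "t \<in> CT" using tT unfolding CT_def .
    have P: "tail1 t \<in> CN" "tail2 t \<in> CN" using calT_props[of t m Js] tT unfolding CN_def by auto
    have "out (tail1 t) \<le> b n"
      using key[of "card (tail1 t)"] P(1) bmono[of "card (tail1 t)" n] calN_card(3)[OF assms, of "tail1 t"]
      unfolding CN_def by auto
    moreover have "out (tail2 t) \<le> b n"
      using key[of "card (tail2 t)"] P(2) bmono[of "card (tail2 t)" n] calN_card(3)[OF assms, of "tail2 t"]
      unfolding CN_def by auto
    ultimately show "lam t j \<le> b n" using j l1out[OF tC] l2out[OF tC] by auto
  qed
qed

end
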